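(* For every integer $m\ge 5$, the independence polynomial $I(T_{m,3};t)$ is unimodal and its mode belongs to $\{\rho_m,\rho_m+1,\rho_m+2\}$, where $\rho_m$ denotes the mode of the independence polynomial $I(C_m;t)$ of the cycle $C_m$.
   Context: For a simple graph $G$, the independence polynomial is $I(G;t)=\sum_{k\ge 0}s_k(G)t^k$, where $s_k(G)$ is the number of independent sets (sets of pairwise non-adjacent vertices) of size $k$ in $G$. $C_m$ is the cycle on $m$ vertices; its independence polynomial is known to be unimodal. For integers $m\ge 3$, $n\ge 1$, the tadpole graph $T_{m,n}$ is the simple graph with vertex set $\{x_1,\dots,x_m,y_1,\dots,y_n\}$ and edges $\{x_i,x_{i+1}\}$ for $1\le i\le m-1$, $\{x_m,x_1\}$, $\{y_j,y_{j+1}\}$ for $1\le j\le n-1$, and $\{x_m,y_1\}$. A polynomial $\sum a_kt^k$ with nonnegative coefficients is unimodal if $a_0\le\cdots\le a_m\ge a_{m+1}\ge\cdots$ for some $m$; with $a_{-1}=0$, its mode is the unique $i$ with $a_{i-1}<a_i\ge a_{i+1}\ge a_{i+2}\ge\cdots$. *)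

theory Defs
  imports "HOL-Computational_Algebra.Polynomial"
begin

text \<open>A simple graph is given by a finite vertex set V and a set Ed of 2-element edges.\<close>

definition independent_set :: "'a set \<Rightarrow> 'a set set \<Rightarrow> 'a set \<Rightarrow> bool" where
  "independent_set V Ed S \<longleftrightarrow> S \<subseteq> V \<and> (\<forall>x\<in>S. \<forall>y\<in>S. {x, y} \<notin> Ed)"

definition indep_count :: "'a set \<Rightarrow> 'a set set \<Rightarrow> nat \<Rightarrow> nat" where
  "indep_count V Ed k = card {S. independent_set V Ed S \<and> card S = k}"

text \<open>I(G;t) = sum_k s_k(G) t^k (independent sets have size at most card V).\<close>
definition indep_poly :: "'a set \<Rightarrow> 'a set set \<Rightarrow> nat poly" where
  "indep_poly V Ed = (\<Sum>k\<le>card V. monom (indep_count V Ed k) k)"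

definition unimodal :: "nat poly \<Rightarrow> bool" where
  "unimodal p \<longleftrightarrow> (\<exists>m. (\<forall>i<m. coeff p i \<le> coeff p (Suc i)) \<and>
                        (\<forall>i\<ge>m. coeff p (Suc i) \<le> coeff p i))"

definition is_mode :: "nat poly \<Rightarrow> nat \<Rightarrow> bool" where
  "is_mode p i \<longleftrightarrow> (if i = 0 then 0 < coeff p 0 else coeff p (i - 1) < coeff p i) \<and>
                   (\<forall>j\<ge>i. coeff p (Suc j) \<le> coeff p j)"

definition mode :: "nat poly \<Rightarrow> nat" where
  "mode p = (THE i. is_mode p i)"

definition cycle_vertices :: "nat \<Rightarrow> nat set" where
  "cycle_vertices m = {1..m}"

definition cycle_edges :: "nat \<Rightarrow> nat set set" where
  "cycle_edges m = {{i, i + 1} | i. 1 \<le> i \<and> i \<le> m - 1} \<union> {{m, 1}}"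

text \<open>Tadpole T_{m,n}: x_i = Inl i (1 <= i <= m), y_j = Inr j (1 <= j <= n).\<close>
definition tadpole_vertices :: "nat \<Rightarrow> nat \<Rightarrow> (nat + nat) set" where
  "tadpole_vertices m n = Inl ` {1..m} \<union> Inr ` {1..n}"

definition tadpole_edges :: "nat \<Rightarrow> nat \<Rightarrow> (nat + nat) set set" where
  "tadpole_edges m n =
     {{Inl i, Inl (i + 1)} | i. 1 \<le> i \<and> i \<le> m - 1} \<union> {{Inl m, Inl 1}} \<union>
     {{Inr j, Inr (j + 1)} | j. 1 \<le> j \<and> j \<le> n - 1} \<union> {{Inl m, Inr 1}}"

end

theory Submission
  imports Defs
begin

definition ISets :: "'a set \<Rightarrow> 'a set set \<Rightarrow> nat \<Rightarrow> 'a set set" where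
  "ISets V Ed k = {S. independent_set V Ed S \<and> card S = k}"

lemma indep_count_ISets: "indep_count V Ed k = card (ISets V Ed k)"
  by (simp add: indep_count_def ISets_def)

lemma finite_ISets: "finite V \<Longrightarrow> finite (ISets V Ed k)"
  by (rule finite_subset[of _ "Pow V"]) (auto simp: ISets_def independent_set_def)

lemma indep_count_0: "finite V \<Longrightarrow> indep_count V Ed 0 = 1"
proof -
  assume fV: "finite V"
  have "ISets V Ed 0 = {{}}"
    using fV by (auto simp: ISets_def independent_set_def dest: finite_subset)
  then show ?thesis by (simp add: indep_count_ISets)
qed

lemma indep_count_delete:
  assumes fV: "finite V" and vV: "v \<in> V" and nl: "{v} \<notin> Ed"
  shows "indep_count V Ed (Suc k) = indep_count (V - {v}) Ed (Suc k)
           + indep_count (V - {v} - {u. {u, v} \<in> Ed}) Ed k"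
proof -
  let ?W = "V - {v} - {u. {u, v} \<in> Ed}"
  have split: "ISets V Ed (Suc k) = ISets (V - {v}) Ed (Suc k) \<union> {S \<in> ISets V Ed (Suc k). v \<in> S}"
    by (auto simp: ISets_def independent_set_def)
  have disj: "ISets (V - {v}) Ed (Suc k) \<inter> {S \<in> ISets V Ed (Suc k). v \<in> S} = {}"
    by (auto simp: ISets_def independent_set_def)
  have bij: "bij_betw (\<lambda>S. S - {v}) {S \<in> ISets V Ed (Suc k). v \<in> S} (ISets ?W Ed k)"
  proof (rule bij_betw_byWitness[where f' = "insert v"])
    show "\<forall>a\<in>{S \<in> ISets V Ed (Suc k). v \<in> S}. insert v (a - {v}) = a" by auto
    show "\<forall>a'\<in>ISets ?W Ed k. insert v a' - {v} = a'" by (auto simp: ISets_def independent_set_def)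
    show "(\<lambda>S. S - {v}) ` {S \<in> ISets V Ed (Suc k). v \<in> S} \<subseteq> ISets ?W Ed k"
    proof
      fix T assume "T \<in> (\<lambda>S. S - {v}) ` {S \<in> ISets V Ed (Suc k). v \<in> S}"
      then obtain S where S: "S \<in> ISets V Ed (Suc k)" "v \<in> S" "T = S - {v}" by auto
      have fS: "finite S" using S fV by (auto simp: ISets_def independent_set_def intro: finite_subset)
      show "T \<in> ISets ?W Ed k"
        using S fS by (auto simp: ISets_def independent_set_def)
    qed
    show "insert v ` ISets ?W Ed k \<subseteq> {S \<in> ISets V Ed (Suc k). v \<in> S}"
    proof
      fix S assume "S \<in> insert v ` ISets ?W Ed k"
      then obtain T where T: "T \<in> ISets ?W Ed k" "S = insert v T" by auto
      have fT: "finite T" using T fV by (auto simp: ISets_def independent_set_def intro: finite_subset)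
      have vT: "v \<notin> T" using T by (auto simp: ISets_def independent_set_def)
      have "\<forall>x\<in>S. \<forall>y\<in>S. {x, y} \<notin> Ed"
      proof (intro ballI)
        fix x y assume "x \<in> S" "y \<in> S"
        then show "{x, y} \<notin> Ed"
          using T nl by (auto simp: ISets_def independent_set_def insert_commute)
      qed
      then show "S \<in> {S \<in> ISets V Ed (Suc k). v \<in> S}"
        using T fT vT vV by (auto simp: ISets_def independent_set_def)
    qed
  qed
  have f1: "finite (ISets (V - {v}) Ed (Suc k))" using fV by (simp add: finite_ISets)
  have f2: "finite {S \<in> ISets V Ed (Suc k). v \<in> S}" using fV by (simp add: finite_ISets)
  show ?thesis
    unfolding indep_count_ISets
    by (subst split, subst card_Un_disjoint[OF f1 f2 disj]) (simp add: bij_betw_same_card[OF bij])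
qed

lemma indep_count_transfer:
  assumes inj: "inj_on f V"
    and ed: "\<And>x y. x \<in> V \<Longrightarrow> y \<in> V \<Longrightarrow> ({f x, f y} \<in> Ed' \<longleftrightarrow> {x, y} \<in> Ed)"
  shows "indep_count (f ` V) Ed' k = indep_count V Ed k"
proof -
  have eq: "ISets (f ` V) Ed' k = (\<lambda>S. f ` S) ` ISets V Ed k"
  proof
    show "ISets (f ` V) Ed' k \<subseteq> (\<lambda>S. f ` S) ` ISets V Ed k"
    proof
      fix T assume T: "T \<in> ISets (f ` V) Ed' k"
      then have "T \<subseteq> f ` V" by (simp add: ISets_def independent_set_def)
      then obtain S where S: "S \<subseteq> V" "T = f ` S" by (auto simp: subset_image_iff)
      have injS: "inj_on f S" using inj S(1) by (rule inj_on_subset)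
      have "S \<in> ISets V Ed k"
        using T S injS ed by (auto simp: ISets_def independent_set_def card_image subset_iff)
      then show "T \<in> (\<lambda>S. f ` S) ` ISets V Ed k" using S by auto
    qed
    show "(\<lambda>S. f ` S) ` ISets V Ed k \<subseteq> ISets (f ` V) Ed' k"
    proof
      fix T assume "T \<in> (\<lambda>S. f ` S) ` ISets V Ed k"
      then obtain S where S: "S \<in> ISets V Ed k" "T = f ` S" by auto
      have SV: "S \<subseteq> V" using S by (simp add: ISets_def independent_set_def)
      have injS: "inj_on f S" using inj SV by (rule inj_on_subset)
      show "T \<in> ISets (f ` V) Ed' k"
        using S SV injS ed by (auto simp: ISets_def independent_set_def card_image subset_iff)
    qed
  qed
  have "inj_on (\<lambda>S. f ` S) (ISets V Ed k)"
  proof (rule inj_onI)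
    fix S1 S2 assume "S1 \<in> ISets V Ed k" "S2 \<in> ISets V Ed k" "f ` S1 = f ` S2"
    then show "S1 = S2" using inj_on_image_eq_iff[OF inj]
      by (auto simp: ISets_def independent_set_def)
  qed
  then show ?thesis unfolding indep_count_ISets eq by (simp add: card_image)
qed


definition path_edges :: "nat set set" where
  "path_edges = {{i, Suc i} | i. True}"

lemma mem_path_edges: "{u, v} \<in> path_edges \<longleftrightarrow> u = Suc v \<or> v = Suc u"
  by (auto simp: path_edges_def doubleton_eq_iff)

lemma single_notin_path_edges: "{v} \<notin> path_edges"
  by (auto simp: path_edges_def doubleton_eq_iff)

lemma binom_step:
  "((n' + 1 - Suc j) choose Suc j) + ((n' - 1 + 1 - j) choose j) = ((Suc n' + 1 - Suc j) choose Suc j)"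
proof (cases "n' = 0")
  case True then show ?thesis by (cases j) auto
next
  case False
  show ?thesis
  proof (cases "j \<le> n'")
    case True
    then have "Suc n' + 1 - Suc j = Suc (n' - j)" "n' - 1 + 1 - j = n' - j" "n' + 1 - Suc j = n' - j"
      using False by auto
    then show ?thesis by simp
  next
    case F2: False
    then show ?thesis using False by (simp add: binomial_eq_0)
  qed
qed

lemma path_count: "indep_count {a..<a+n} path_edges k = (n + 1 - k) choose k"
proof (induction n arbitrary: k rule: less_induct)
  case (less n)
  show ?case
  proof (cases k)
    case 0 then show ?thesis by (simp add: indep_count_0)
  next
    case (Suc j)
    show ?thesis
    proof (cases n)
      case 0
      have "ISets {a..<a+n} path_edges k = {}"
        using 0 Suc by (auto simp: ISets_def independent_set_def)
      then show ?thesis using 0 Suc by (simp add: indep_count_ISets)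
    next
      case (Suc n')
      have V1: "{a..<a+n} - {a+n'} = {a..<a+n'}" using Suc by auto
      have V2: "{a..<a+n} - {a+n'} - {u. {u, a+n'} \<in> path_edges} = {a..<a+(n'-1)}"
        using Suc by (auto simp: mem_path_edges)
      have "indep_count {a..<a+n} path_edges (Suc j) =
            indep_count {a..<a+n'} path_edges (Suc j) + indep_count {a..<a+(n'-1)} path_edges j"
        using indep_count_delete[of "{a..<a+n}" "a+n'" path_edges j] Suc V1 V2
        by (simp add: single_notin_path_edges)
      also have "\<dots> = ((n' + 1 - Suc j) choose Suc j) + ((n' - 1 + 1 - j) choose j)"
        using less.IH[of n'] less.IH[of "n'-1"] Suc by simp
      also have "\<dots> = (n + 1 - Suc j) choose Suc j" using binom_step Suc by simp
      finally show ?thesis using \<open>k = Suc j\<close> by simp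
    qed
  qed
qed


definition pb :: "nat \<Rightarrow> nat \<Rightarrow> nat" where "pb m k = (m - k) choose k"
definition cc :: "nat \<Rightarrow> nat \<Rightarrow> nat" where
  "cc m k = (if k = 0 then 1 else ((m - k) choose k) + ((m - k - 1) choose (k - 1)))"
definition tt :: "nat \<Rightarrow> nat \<Rightarrow> nat" where
  "tt m k = (if k = 0 then 1 else cc m k + 2 * cc m (k - 1) + pb m (k - 1) + (if k = 1 then 0 else pb m (k - 2)))"

lemma mem_cycle_edges:
  "{x, y} \<in> cycle_edges m \<longleftrightarrow> (\<exists>i. 1 \<le> i \<and> i \<le> m - 1 \<and> ((x = i \<and> y = i + 1) \<or> (y = i \<and> x = i + 1))) \<or> (x = m \<and> y = 1) \<or> (x = 1 \<and> y = m)"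
  unfolding cycle_edges_def by (auto simp: doubleton_eq_iff)

lemma cycle_path_agree:
  assumes "x \<in> {1..<m}" "y \<in> {1..<m}"
  shows "{x, y} \<in> cycle_edges m \<longleftrightarrow> {x, y} \<in> path_edges"
  using assms unfolding mem_cycle_edges mem_path_edges by auto

lemma indep_count_cong_edges:
  assumes "\<And>x y. x \<in> V \<Longrightarrow> y \<in> V \<Longrightarrow> ({x, y} \<in> E \<longleftrightarrow> {x, y} \<in> E')"
  shows "indep_count V E k = indep_count V E' k"
  using indep_count_transfer[of id V E' E k] assms by simp

lemma cycle_count:
  assumes m: "m \<ge> 3"
  shows "indep_count (cycle_vertices m) (cycle_edges m) k = cc m k"
proof (cases k)
  case 0 then show ?thesis by (simp add: indep_count_0 cycle_vertices_def cc_def)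
next
  case (Suc j)
  have nl: "{m} \<notin> cycle_edges m"
    using m by (auto simp: cycle_edges_def doubleton_eq_iff)
  have V1: "{1..m} - {m} = {1..<1+(m-1)}" using m by auto
  have V2: "{1..m} - {m} - {u. {u, m} \<in> cycle_edges m} = {2..<2+(m-3)}"
    using m unfolding mem_cycle_edges by (auto intro!: exI[of _ "m - 1"])
  have c1: "indep_count {1..<1+(m-1)} (cycle_edges m) (Suc j) = indep_count {1..<1+(m-1)} path_edges (Suc j)"
    by (rule indep_count_cong_edges) (rule cycle_path_agree, auto)
  have c2: "indep_count {2..<2+(m-3)} (cycle_edges m) j = indep_count {2..<2+(m-3)} path_edges j"
    by (rule indep_count_cong_edges) (rule cycle_path_agree, auto)
  have "indep_count {1..m} (cycle_edges m) (Suc j) =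
        indep_count {1..<1+(m-1)} (cycle_edges m) (Suc j) + indep_count {2..<2+(m-3)} (cycle_edges m) j"
    using indep_count_delete[of "{1..m}" m "cycle_edges m" j] m nl V1 V2 by simp
  also have "\<dots> = ((m - 1 + 1 - Suc j) choose Suc j) + ((m - 3 + 1 - j) choose j)"
    unfolding c1 c2 path_count by simp
  also have "\<dots> = cc m (Suc j)"
    using m by (simp add: cc_def)
  finally show ?thesis using Suc by (simp add: cycle_vertices_def)
qed


lemma tad_Inl_Inl: "{Inl x, Inl y} \<in> tadpole_edges m n \<longleftrightarrow> {x, y} \<in> cycle_edges m"
  unfolding tadpole_edges_def cycle_edges_def by (auto simp: doubleton_eq_iff)

lemma tad_Inr3: "{{Inr (j::nat), Inr (j + 1)} | j. 1 \<le> j \<and> j \<le> 3 - 1} = ({{Inr 1, Inr 2}, {Inr 2, Inr (3::nat)}} :: (nat + nat) set set)"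
proof
  show "{{Inr (j::nat), Inr (j + 1)} | j. 1 \<le> j \<and> j \<le> 3 - 1} \<subseteq> ({{Inr 1, Inr 2}, {Inr 2, Inr (3::nat)}} :: (nat + nat) set set)"
    by (auto simp: le_Suc_eq numeral_2_eq_2 numeral_3_eq_3)
  have a: "{Inr 1, Inr 2} \<in> {{Inr (j::nat), Inr (j + 1)} | j. 1 \<le> j \<and> j \<le> 3 - 1}"
    by (rule CollectI, rule exI[of _ 1]) (simp add: numeral_2_eq_2)
  have b: "{Inr 2, Inr 3} \<in> {{Inr (j::nat), Inr (j + 1)} | j. 1 \<le> j \<and> j \<le> 3 - 1}"
    by (rule CollectI, rule exI[of _ 2]) (simp add: numeral_2_eq_2 numeral_3_eq_3)
  show "({{Inr 1, Inr 2}, {Inr 2, Inr (3::nat)}} :: (nat + nat) set set) \<subseteq> {{Inr (j::nat), Inr (j + 1)} | j. 1 \<le> j \<and> j \<le> 3 - 1}"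
    using a b by auto
qed

lemma tad_edges3: "tadpole_edges m 3 = {{Inl i, Inl (i + 1)} | i. 1 \<le> i \<and> i \<le> m - 1} \<union> {{Inl m, Inl 1}} \<union>
     {{Inr 1, Inr 2}, {Inr 2, Inr 3}} \<union> {{Inl m, Inr 1}}"
  unfolding tadpole_edges_def tad_Inr3 ..

lemma tad_N3: "{u, Inr 3} \<in> tadpole_edges m 3 \<longleftrightarrow> u = Inr 2"
  unfolding tad_edges3 by (cases u) (auto simp: doubleton_eq_iff)

lemma tad_N2: "{u, Inr 2} \<in> tadpole_edges m 3 \<longleftrightarrow> u = Inr 1 \<or> u = Inr 3"
  unfolding tad_edges3 by (cases u) (auto simp: doubleton_eq_iff)

lemma tad_N1: "{u, Inr 1} \<in> tadpole_edges m 3 \<longleftrightarrow> u = Inr 2 \<or> u = Inl m"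
  unfolding tad_edges3 by (cases u) (auto simp: doubleton_eq_iff)

lemma tad_N1': "{Inl x, Inr (Suc 0)} \<in> tadpole_edges m 3 \<longleftrightarrow> x = m"
  using tad_N1[of "Inl x" m] by simp

lemma tad_single: "{Inr j} \<notin> tadpole_edges m n"
  unfolding tadpole_edges_def by (auto simp: doubleton_eq_iff)

lemma count_T0:
  assumes "m \<ge> 3"
  shows "indep_count (Inl ` {1..m}) (tadpole_edges m 3) k = cc m k"
proof -
  have "indep_count (Inl ` {1..m}) (tadpole_edges m 3) k = indep_count {1..m} (cycle_edges m) k"
    by (rule indep_count_transfer) (auto simp: tad_Inl_Inl)
  then show ?thesis using cycle_count[OF assms, of k] by (simp add: cycle_vertices_def)
qed

lemma count_Tp:
  assumes "m \<ge> 3"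
  shows "indep_count (Inl ` {1..<m}) (tadpole_edges m 3) k = pb m k"
proof -
  have "indep_count (Inl ` {1..<m}) (tadpole_edges m 3) k = indep_count {1..<m} (cycle_edges m) k"
    by (rule indep_count_transfer) (auto simp: tad_Inl_Inl)
  also have "\<dots> = indep_count {1..<m} path_edges k"
    by (intro indep_count_cong_edges cycle_path_agree) auto
  also have "\<dots> = indep_count {1..<1+(m-1)} path_edges k"
    using assms by (simp add: Suc_diff_le)
  also have "\<dots> = pb m k" unfolding path_count pb_def using assms
    by (simp add: Suc_diff_le)
  finally show ?thesis .
qed

lemma tadpole_count:
  assumes m: "m \<ge> 3"
  shows "indep_count (tadpole_vertices m 3) (tadpole_edges m 3) k = tt m k"
proof -
  define E where "E = tadpole_edges m 3"
  define V0 :: "(nat + nat) set" where "V0 = Inl ` {1..m}"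
  define V1 where "V1 = insert (Inr 1) V0"
  define V2 where "V2 = insert (Inr 2) V1"
  define V3 where "V3 = insert (Inr 3) V2"
  have fV0: "finite V0" by (simp add: V0_def)
  have V3eq: "tadpole_vertices m 3 = V3"
    by (auto simp: tadpole_vertices_def V3_def V2_def V1_def V0_def)
  have e3: "V3 - {Inr 3} = V2" "V3 - {Inr 3} - {u. {u, Inr 3} \<in> E} = V1"
    by (auto simp: V3_def V2_def V1_def V0_def E_def tad_N3)
  have e2: "V2 - {Inr 2} = V1" "V2 - {Inr 2} - {u. {u, Inr 2} \<in> E} = V0"
    by (auto simp: V2_def V1_def V0_def E_def tad_N2)
  have e1: "V1 - {Inr 1} = V0" "V1 - {Inr 1} - {u. {u, Inr 1} \<in> E} = Inl ` {1..<m}"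
    using m by (auto simp: V1_def V0_def E_def tad_N1 tad_N1')
  have T3: "indep_count V3 E (Suc j) = indep_count V2 E (Suc j) + indep_count V1 E j" for j
    using indep_count_delete[of V3 "Inr 3" E j] e3 fV0
    by (simp add: V3_def V2_def V1_def E_def tad_single)
  have T2: "indep_count V2 E (Suc j) = indep_count V1 E (Suc j) + indep_count V0 E j" for j
    using indep_count_delete[of V2 "Inr 2" E j] e2 fV0
    by (simp add: V2_def V1_def E_def tad_single)
  have T1: "indep_count V1 E (Suc j) = indep_count V0 E (Suc j) + pb m j" for j
    using indep_count_delete[of V1 "Inr 1" E j] e1 fV0 count_Tp[OF m, of j]
    by (simp add: V1_def E_def tad_single)
  have T0: "indep_count V0 E j = cc m j" for j
    using count_T0[OF m] by (simp add: V0_def E_def)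
  have T10: "indep_count V1 E 0 = 1" using fV0 by (simp add: V1_def indep_count_0)
  have T1': "indep_count V1 E j = cc m j + (if j = 0 then 0 else pb m (j - 1))" for j
    by (cases j) (simp_all add: T10 T1 T0 cc_def)
  show ?thesis
  proof (cases k)
    case 0 then show ?thesis using fV0 by (simp add: V3eq V3_def V2_def V1_def indep_count_0 tt_def)
  next
    case (Suc j)
    show ?thesis unfolding V3eq E_def[symmetric] Suc T3 T2 T1' T0
      by (simp add: tt_def)
  qed
qed


definition FF :: "nat \<Rightarrow> nat \<Rightarrow> nat \<Rightarrow> nat" where
 "FF k km1 a = (2*k+a)*(a+1)*(a+2)*(a+3)*(a+4) + (2*k*(2*k+a)+k*(k+a+1))*(k+a)*(a+3)*(a+4) + k*km1*(k+a+1)*(k+a+2)*(k+a)"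
lemma polyid: fixes K A :: nat shows
 "(FF (K+3) (K+2) (A+2))^2 * ((A+7)*(A+8)*(K+A+4)*(K+4)) = FF (K+2) (K+1) (A+4) * FF (K+4) (K+3) A * ((K+A+5)*(A+5)*(A+6)*(K+3)) + (101258035200 + 199070714880*A + 179093996928*A^2 + 97595128512*A^3 + 35928496568*A^4 + 9431889316*A^5 + 1815699298*A^6 + 259393055*A^7 + 27486534*A^8 + 2132583*A^9 + 117694*A^10 + 4373*A^11 + 98*A^12 + A^13 + 188322036480*K + 340456628736*K*A + 279849527088*K*A^2 + 138267134880*K*A^3 + 45719489384*K*A^4 + 10654891044*K*A^5 + 1793787415*K*A^6 + 219707397*K*A^7 + 19420872*K*A^8 + 1207578*K*A^9 + 50107*K*A^10 + 1245*K*A^11 + 14*K*A^12 + 158394916224*K^2 + 261695702736*K^2*A + 195032173080*K^2*A^2 + 86530825224*K^2*A^3 + 25389178102*K^2*A^4 + 5171341991*K^2*A^5 + 745858069*K^2*A^6 + 76142729*K^2*A^7 + 5389408*K^2*A^8 + 251753*K^2*A^9 + 6981*K^2*A^10 + 87*K^2*A^11 + 79468172304*K^3 + 119129844968*K^3*A + 79768077020*K^3*A^2 + 31413524952*K^3*A^3 + 8056158532*K^3*A^4 + 1405543742*K^3*A^5 + 168904610*K^3*A^6 + 13800008*K^3*A^7 + 733348*K^3*A^8 + 22878*K^3*A^9 + 318*K^3*A^10 + 26423981096*K^4 + 35625953380*K^4*A + 21192393308*K^4*A^2 + 7299729013*K^4*A^3 + 1604340302*K^4*A^4 + 233279536*K^4*A^5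 + 22436702*K^4*A^6 + 1376062*K^4*A^7 + 48818*K^4*A^8 + 763*K^4*A^9 + 6130786140*K^5 + 7348986346*K^5*A + 3826798401*K^5*A^2 + 1130533885*K^5*A^3 + 207223452*K^5*A^4 + 24128968*K^5*A^5 + 1742634*K^5*A^6 + 71356*K^5*A^7 + 1268*K^5*A^8 + 1022186902*K^6 + 1072203044*K^6*A + 478857783*K^6*A^2 + 118014195*K^6*A^3 + 17329650*K^6*A^4 + 1515906*K^6*A^5 + 73122*K^6*A^6 + 1500*K^6*A^7 + 125179092*K^7 + 112299234*K^7*A + 41758102*K^7*A^2 + 8234850*K^7*A^3 + 907930*K^7*A^4 + 53040*K^7*A^5 + 1282*K^7*A^6 + 11495478*K^8 + 8533296*K^8*A + 2526630*K^8*A^2 + 372795*K^8*A^3 + 27390*K^8*A^4 + 801*K^8*A^5 + 800580*K^9 + 469438*K^9*A + 103265*K^9*A^2 + 10097*K^9*A^3 + 370*K^9*A^4 + 41074*K^10 + 17780*K^10*A + 2575*K^10*A^2 + 125*K^10*A^3 + 1404*K^11 + 398*K^11*A + 28*K^11*A^2 + 26*K^12 + 4*K^12*A)"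
  unfolding FF_def by algebra
lemma polyineq: fixes K A :: nat shows
 "FF (K+2) (K+1) (A+4) * FF (K+4) (K+3) A * ((K+A+5)*(A+5)*(A+6)*(K+3)) \<le> (FF (K+3) (K+2) (A+2))^2 * ((A+7)*(A+8)*(K+A+4)*(K+4))"
  unfolding polyid by (rule le_add1)

lemma B1: "(m - k) * cc m k = m * pb m k"
proof (cases "k = 0")
  case True then show ?thesis by (simp add: cc_def pb_def)
next
  case False
  show ?thesis
  proof (cases "k \<le> m")
    case True
    have "(m - k) * ((m - k - 1) choose (k - 1)) = k * ((m - k) choose k)"
      using times_binomial_minus1_eq[of k "m - k"] False by simp
    then have "(m - k) * cc m k = (m - k) * ((m - k) choose k) + k * ((m - k) choose k)"
      using False by (simp add: cc_def algebra_simps)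
    also have "\<dots> = m * pb m k" using True by (simp add: pb_def algebra_simps)
    finally show ?thesis .
  next
    case F2: False
    then show ?thesis using False by (simp add: pb_def binomial_eq_0)
  qed
qed

lemma absorb1: "Suc k * (N choose Suc k) = (N - k) * (N choose k)"
  using binomial_absorption[of k N] binomial_absorb_comp[of N k] by simp

lemma B2: "(k + 1) * (m - k) * pb m (k + 1) = (m - 2 * k) * (m - 2 * k - 1) * pb m k"
proof -
  define n where "n = m - k"
  have p1: "pb m (k + 1) = (n - 1) choose (k + 1)" by (simp add: pb_def n_def)
  have p0: "pb m k = n choose k" by (simp add: pb_def n_def)
  have a: "(k + 1) * ((n - 1) choose (k + 1)) = (n - 1 - k) * ((n - 1) choose k)"
    using absorb1[of k "n - 1"] by simp
  have b: "n * ((n - 1) choose k) = (n - k) * (n choose k)"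
    using binomial_absorb_comp[of n k] by simp
  have nk: "n - k = m - 2 * k" "n - 1 - k = m - 2 * k - 1" by (simp_all add: n_def)
  have "(k + 1) * (m - k) * pb m (k + 1) = n * ((k + 1) * ((n - 1) choose (k + 1)))"
    by (simp only: p1 n_def[symmetric] mult.assoc mult.commute mult.left_commute)
  also have "\<dots> = (n - 1 - k) * (n * ((n - 1) choose k))" by (simp only: a mult.assoc mult.commute mult.left_commute)
  also have "\<dots> = (n - 1 - k) * (n - k) * (n choose k)" by (simp only: b mult.assoc mult.commute mult.left_commute)
  also have "\<dots> = (m - 2 * k) * (m - 2 * k - 1) * pb m k"
    by (simp only: p0 nk mult.assoc mult.commute mult.left_commute)
  finally show ?thesis .
qed

lemma B2c:
  assumes "k < m"
  shows "(k + 1) * (m - k - 1) * cc m (k + 1) = (m - 2 * k) * (m - 2 * k - 1) * cc m k"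
proof -
  obtain d where d: "m = k + 1 + d" using assms less_imp_Suc_add by fastforce
  define u where "u = m - 2 * k"
  define v where "v = m - 2 * k - 1"
  have e1: "d * cc m (k + 1) = m * pb m (k + 1)" using B1[of m "k+1"] d by simp
  have e0: "(d + 1) * cc m k = m * pb m k" using B1[of m k] d by simp
  have e2: "(k + 1) * (d + 1) * pb m (k + 1) = u * v * pb m k" using B2[of k m] d by (simp add: u_def v_def)
  have "(d + 1) * ((k + 1) * d * cc m (k + 1)) = (d + 1) * (u * v * cc m k)"
  proof -
    have "(d + 1) * ((k + 1) * d * cc m (k + 1)) = m * ((k + 1) * (d + 1) * pb m (k + 1))"
      using e1 by (metis mult.assoc mult.commute mult.left_commute)
    also have "\<dots> = m * (u * v * pb m k)" using e2 by simp
    also have "\<dots> = (d + 1) * (u * v * cc m k)"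
      using e0 by (metis mult.assoc mult.commute mult.left_commute)
    finally show ?thesis .
  qed
  then have "(k + 1) * d * cc m (k + 1) = u * v * cc m k"
    by (rule mult_left_cancel[of "d + 1", THEN iffD1, rotated]) simp
  then show ?thesis using d by (simp add: u_def v_def)
qed

lemma pb_zero: "m < 2 * k \<Longrightarrow> pb m k = 0"
  by (simp add: pb_def binomial_eq_0)

lemma cc_zero: "m < 2 * k \<Longrightarrow> 2 \<le> k \<Longrightarrow> cc m k = 0"
  by (simp add: cc_def binomial_eq_0)

lemma tt_zero: "m < 2 * (k - 2) \<Longrightarrow> 4 \<le> k \<Longrightarrow> tt m k = 0"
  by (simp add: tt_def cc_zero pb_zero)

lemma C2:
  assumes m: "m \<ge> 2" and h: "cc m (k + 1) < cc m (k + 2)"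
  shows "cc m k < cc m (k + 1)"
proof -
  have "\<not> m < 2 * (k + 2)" using h cc_zero[of m "k+2"] by auto
  then obtain y where y: "m = 2 * k + 4 + y" using le_Suc_ex[of "2 * k + 4" m] by auto
  have s1: "m - (k + 1) - 1 = k + 2 + y" "m - 2 * (k + 1) = y + 2" "m - 2 * (k + 1) - 1 = y + 1"
    "k + 1 + 1 = k + 2" "m - k - 1 = k + 3 + y" "m - 2 * k = y + 4" "m - 2 * k - 1 = y + 3" "k + 1 < m" "k < m"
    using y by simp_all
  have r1: "(k + 2) * (k + 2 + y) * cc m (k + 2) = (y + 2) * (y + 1) * cc m (k + 1)"
    using B2c[OF s1(8)] unfolding s1 by simp
  have r0: "(k + 1) * (k + 3 + y) * cc m (k + 1) = (y + 4) * (y + 3) * cc m k"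
    using B2c[OF s1(9)] unfolding s1 by simp
  have c1pos: "cc m (k + 1) > 0"
  proof (rule ccontr)
    assume "\<not> cc m (k + 1) > 0"
    then have "cc m (k + 2) = 0" using r1 by simp
    then show False using h by simp
  qed
  have "(k + 2) * (k + 2 + y) * cc m (k + 1) < (k + 2) * (k + 2 + y) * cc m (k + 2)"
    by (rule mult_strict_left_mono[OF h]) simp
  then have "(k + 2) * (k + 2 + y) * cc m (k + 1) < (y + 2) * (y + 1) * cc m (k + 1)"
    unfolding r1 .
  then have q1: "(k + 2) * (k + 2 + y) < (y + 2) * (y + 1)"
    using c1pos by (simp only: mult_less_cancel2)
  have q2: "(y + 4) * (y + 3) = (y + 2) * (y + 1) + 4 * y + 10" by (simp add: algebra_simps)
  have q3: "(k + 2) * (k + 2 + y) = (k + 1) * (k + 3 + y) + y + 1" by (simp add: algebra_simps)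
  have q: "(k + 1) * (k + 3 + y) < (y + 4) * (y + 3)" using q1 q2 q3 by linarith
  have "(y + 4) * (y + 3) * cc m k < (y + 4) * (y + 3) * cc m (k + 1)"
    using r0 q c1pos by (metis mult_less_mono1)
  then show ?thesis by simp
qed

lemma P_up:
  assumes m: "m \<ge> 2" and h: "cc m (i + 1) < cc m (i + 2)"
  shows "pb m i \<le> pb m (i + 1)"
proof -
  have "\<not> m < 2 * (i + 2)" using h cc_zero[of m "i+2"] by auto
  then obtain y where y: "m = 2 * i + 4 + y" using le_Suc_ex[of "2 * i + 4" m] by auto
  have s1: "m - (i + 1) - 1 = i + 2 + y" "m - 2 * (i + 1) = y + 2" "m - 2 * (i + 1) - 1 = y + 1"
    "i + 1 + 1 = i + 2" "m - i = i + 4 + y" "m - 2 * i = y + 4" "m - 2 * i - 1 = y + 3" "i + 1 < m"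
    using y by simp_all
  have r1: "(i + 2) * (i + 2 + y) * cc m (i + 2) = (y + 2) * (y + 1) * cc m (i + 1)"
    using B2c[OF s1(8)] unfolding s1 by simp
  have r0: "(i + 1) * (i + 4 + y) * pb m (i + 1) = (y + 4) * (y + 3) * pb m i"
    using B2[of i m] unfolding s1 by simp
  have c1pos: "cc m (i + 1) > 0"
  proof (rule ccontr)
    assume "\<not> cc m (i + 1) > 0"
    then have "cc m (i + 2) = 0" using r1 by simp
    then show False using h by simp
  qed
  have "(i + 2) * (i + 2 + y) * cc m (i + 1) < (i + 2) * (i + 2 + y) * cc m (i + 2)"
    by (rule mult_strict_left_mono[OF h]) simp
  then have "(i + 2) * (i + 2 + y) * cc m (i + 1) < (y + 2) * (y + 1) * cc m (i + 1)"
    unfolding r1 .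
  then have q1: "(i + 2) * (i + 2 + y) < (y + 2) * (y + 1)"
    using c1pos by (simp only: mult_less_cancel2)
  have iy: "i < y"
  proof (rule ccontr)
    assume "\<not> i < y"
    then have "(y + 2) * (y + 1) \<le> (i + 2) * (i + 2 + y)" by (intro mult_le_mono) auto
    then show False using q1 by simp
  qed
  have q2: "(y + 4) * (y + 3) = (y + 2) * (y + 1) + 4 * y + 10" by (simp add: algebra_simps)
  have q3: "(i + 2) * (i + 2 + y) + i = (i + 1) * (i + 4 + y) + y" by (simp add: algebra_simps)
  have q: "(i + 1) * (i + 4 + y) \<le> (y + 4) * (y + 3)" using q1 q2 q3 iy by linarith
  have "(y + 4) * (y + 3) * pb m i \<le> (y + 4) * (y + 3) * pb m (i + 1)"
    using r0 q by (metis mult_le_mono1)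
  then show ?thesis by simp
qed

lemma P_down:
  assumes h: "cc m (i + 1) \<le> cc m i"
  shows "pb m (i + 1) \<le> pb m i"
proof (cases "m < 2 * (i + 1)")
  case True then show ?thesis by (simp add: pb_zero)
next
  case False
  then have mi: "m - i > 0" "m > 0" by auto
  have e1: "(m - i - 1) * cc m (i + 1) = m * pb m (i + 1)" using B1[of m "i+1"] by simp
  have e0: "(m - i) * cc m i = m * pb m i" by (rule B1)
  have "m * (m - i) * pb m (i + 1) = (m - i) * ((m - i - 1) * cc m (i + 1))"
    using e1 by (simp add: algebra_simps)
  also have "\<dots> \<le> (m - i) * ((m - i - 1) * cc m i)" using h by simp
  also have "\<dots> = (m - i - 1) * (m * pb m i)" using e0 by (simp add: algebra_simps)
  also have "\<dots> \<le> (m - i) * (m * pb m i)" by (intro mult_le_mono) auto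
  finally have "(m * (m - i)) * pb m (i + 1) \<le> (m * (m - i)) * pb m i" by (simp add: algebra_simps)
  then show ?thesis using mi by simp
qed


lemma Glem:
  assumes m: "m = 2 * J + a + 4"
  shows "(J + 2 + a) * (a + 1) * (a + 2) * (a + 3) * (a + 4) * tt m (J + 2) = FF (J + 2) (J + 1) a * pb m (J + 2)"
proof -
  define P where "P = pb m (J + 2)"
  define p1 where "p1 = pb m (J + 1)"
  define p2 where "p2 = pb m J"
  define c0 where "c0 = cc m (J + 2)"
  define c1 where "c1 = cc m (J + 1)"
  have t: "tt m (J + 2) = c0 + 2 * c1 + p1 + p2"
    by (simp add: tt_def c0_def c1_def p1_def p2_def numeral_2_eq_2)
  have s: "m - (J + 2) = J + 2 + a" "m - (J + 1) = J + 3 + a" "m - (J + 1) = J + a + 3"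
    "m - 2 * (J + 1) = a + 2" "m - 2 * (J + 1) - 1 = a + 1" "J + 1 + 1 = J + 2"
    "m - J = J + a + 4" "m - 2 * J = a + 4" "m - 2 * J - 1 = a + 3" using m by simp_all
  have ec0: "(J + 2 + a) * c0 = m * P" using B1[of m "J + 2"] m by (simp add: c0_def P_def ac_simps)
  have ec1r: "(J + 3 + a) * c1 = m * p1" using B1[of m "J + 1"] m by (simp add: c1_def p1_def ac_simps)
  have ep1: "(J + 2) * (J + a + 3) * P = (a + 2) * (a + 1) * p1"
    using B2[of "J + 1" m] m by (simp add: P_def p1_def ac_simps)
  have ep2r: "(J + 1) * (J + a + 4) * p1 = (a + 4) * (a + 3) * p2"
    using B2[of J m] m by (simp add: p1_def p2_def ac_simps)
  have "(J + 3 + a) * ((a + 1) * (a + 2) * c1) = (J + 3 + a) * (m * (J + 2) * P)"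
  proof -
    have "(J + 3 + a) * ((a + 1) * (a + 2) * c1) = (a + 1) * (a + 2) * ((J + 3 + a) * c1)" by (simp only: ac_simps)
    also have "\<dots> = m * ((a + 2) * (a + 1) * p1)" using ec1r by algebra
    also have "\<dots> = m * ((J + 2) * (J + a + 3) * P)" using ep1 by algebra
    also have "\<dots> = (J + 3 + a) * (m * (J + 2) * P)" by (simp only: ac_simps)
    finally show ?thesis .
  qed
  then have ec1: "(a + 1) * (a + 2) * c1 = m * (J + 2) * P"
    by (rule mult_left_cancel[of "J + 3 + a", THEN iffD1, rotated]) simp
  have ep2: "(a + 1) * (a + 2) * (a + 3) * (a + 4) * p2 = (J + 1) * (J + a + 4) * (J + 2) * (J + a + 3) * P"
  proof -
    have "(a + 1) * (a + 2) * (a + 3) * (a + 4) * p2 = (a + 1) * (a + 2) * ((a + 4) * (a + 3) * p2)" by (simp only: ac_simps)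
    also have "\<dots> = (J + 1) * (J + a + 4) * ((a + 2) * (a + 1) * p1)" using ep2r by algebra
    also have "\<dots> = (J + 1) * (J + a + 4) * (J + 2) * (J + a + 3) * P" using ep1 by algebra
    finally show ?thesis .
  qed
  show ?thesis unfolding t P_def[symmetric] FF_def using ec0 ec1 ep1 ep2 m by algebra
qed


lemma LC_core:
  fixes ta tb tc P Pa Pb Na Nb Nc K A :: nat
  assumes h0: "((K + A + 5) * (A + 3) * (A + 4) * (A + 5) * (A + 6)) * tb = Na * P"
    and h1: "((K + A + 6) * (A + 5) * (A + 6) * (A + 7) * (A + 8)) * ta = Nb * Pa"
    and h2: "((K + A + 4) * (A + 1) * (A + 2) * (A + 3) * (A + 4)) * tc = Nc * Pb"
    and r1: "(A + 4) * (A + 3) * Pa = (K + 3) * (K + A + 6) * P"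
    and r2: "(K + 4) * (K + A + 5) * Pb = (A + 2) * (A + 1) * P"
    and poly: "Nb * Nc * ((K + A + 5) * (A + 5) * (A + 6) * (K + 3)) \<le> Na ^ 2 * ((A + 7) * (A + 8) * (K + A + 4) * (K + 4))"
  shows "ta * tc \<le> tb ^ 2"
proof -
  define D0 where "D0 = (K + A + 5) * (A + 3) * (A + 4) * (A + 5) * (A + 6)"
  define D1 where "D1 = (K + A + 6) * (A + 5) * (A + 6) * (A + 7) * (A + 8)"
  define D2 where "D2 = (K + A + 4) * (A + 1) * (A + 2) * (A + 3) * (A + 4)"
  define M where "M = D0 ^ 2 * D1 * D2 * ((A + 3) * (A + 4) * (K + 4) * (K + A + 5))"
  define Cm where "Cm = (K + A + 6) * (A + 5) * (A + 6) * (A + 1) * (A + 2) * (A + 3) ^ 2 * (A + 4) ^ 2 * (K + A + 5)"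
  have e1: "M * (ta * tc) = Cm * P ^ 2 * (Nb * Nc * ((K + A + 5) * (A + 5) * (A + 6) * (K + 3)))"
    using h1 h2 r1 r2 unfolding M_def Cm_def D0_def D1_def D2_def by algebra
  have e2: "M * tb ^ 2 = Cm * P ^ 2 * (Na ^ 2 * ((A + 7) * (A + 8) * (K + A + 4) * (K + 4)))"
    using h0 unfolding M_def Cm_def D0_def D1_def D2_def by algebra
  have "M * (ta * tc) \<le> M * tb ^ 2"
    unfolding e1 e2 by (rule mult_le_mono2[OF poly])
  moreover have "M > 0" unfolding M_def D0_def D1_def D2_def by simp
  ultimately show ?thesis by simp
qed

lemma LC_tt:
  assumes m: "m = 2 * K + A + 8"
  shows "tt m (K + 2) * tt m (K + 4) \<le> (tt m (K + 3)) ^ 2"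
proof -
  have m0: "m = 2 * (K + 1) + (A + 2) + 4" "m = 2 * K + (A + 4) + 4" "m = 2 * (K + 2) + A + 4" using m by simp_all
  have eqs: "K + 1 + 2 = K + 3" "K + 1 + 1 = K + 2" "K + 3 + (A + 2) = K + A + 5" "A + 2 + 1 = A + 3"
    "A + 2 + 2 = A + 4" "A + 2 + 3 = A + 5" "A + 2 + 4 = A + 6"
    "K + 2 + (A + 4) = K + A + 6" "A + 4 + 1 = A + 5" "A + 4 + 2 = A + 6" "A + 4 + 3 = A + 7" "A + 4 + 4 = A + 8"
    "K + 2 + 2 = K + 4" "K + 2 + 1 = K + 3" "K + 4 + A = K + A + 4" "K + 3 + 1 = K + 4"
    "m - (K + 2) = K + A + 6" "m - 2 * (K + 2) = A + 4" "A + 4 - 1 = A + 3"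
    "m - (K + 3) = K + A + 5" "m - 2 * (K + 3) = A + 2" "A + 2 - 1 = A + 1"
    using m by simp_all
  note g0 = Glem[OF m0(1), unfolded eqs]
  note g1 = Glem[OF m0(2), unfolded eqs]
  note g2 = Glem[OF m0(3), unfolded eqs]
  note b1 = B2[of "K + 2" m, unfolded eqs]
  note b2 = B2[of "K + 3" m, unfolded eqs]
  show ?thesis
  proof (rule LC_core[where K=K and A=A and P="pb m (K + 3)" and Pa="pb m (K + 2)" and Pb="pb m (K + 4)"
    and Na="FF (K + 3) (K + 2) (A + 2)" and Nb="FF (K + 2) (K + 1) (A + 4)" and Nc="FF (K + 4) (K + 3) A"])
    show "(K + A + 5) * (A + 3) * (A + 4) * (A + 5) * (A + 6) * tt m (K + 3) = FF (K + 3) (K + 2) (A + 2) * pb m (K + 3)"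
      by (rule g0)
    show "(K + A + 6) * (A + 5) * (A + 6) * (A + 7) * (A + 8) * tt m (K + 2) = FF (K + 2) (K + 1) (A + 4) * pb m (K + 2)"
      by (rule g1)
    show "(K + A + 4) * (A + 1) * (A + 2) * (A + 3) * (A + 4) * tt m (K + 4) = FF (K + 4) (K + 3) A * pb m (K + 4)"
      by (rule g2)
    show "(A + 4) * (A + 3) * pb m (K + 2) = (K + 3) * (K + A + 6) * pb m (K + 3)"
      by (rule b1[symmetric])
    show "(K + 4) * (K + A + 5) * pb m (K + 4) = (A + 2) * (A + 1) * pb m (K + 3)"
      by (rule b2)
    show "FF (K + 2) (K + 1) (A + 4) * FF (K + 4) (K + 3) A * ((K + A + 5) * (A + 5) * (A + 6) * (K + 3))
      \<le> (FF (K + 3) (K + 2) (A + 2))\<^sup>2 * ((A + 7) * (A + 8) * (K + A + 4) * (K + 4))"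
      by (rule polyineq)
  qed
qed


lemma small_window_all:
  "list_all (\<lambda>m. list_all (\<lambda>k. tt m (k+1) \<le> tt m k \<longrightarrow> tt m (k+2) \<le> tt m (k+1)) [0..<6]) [5..<12]"
  by code_simp

lemma small_window:
  assumes "5 \<le> m" "m \<le> 11" "k < 6" "tt m (k+1) \<le> tt m k"
  shows "tt m (k+2) \<le> tt m (k+1)"
proof -
  have "m \<in> set [5..<12]" "k \<in> set [0..<6]" using assms by auto
  then show ?thesis using small_window_all assms(4) unfolding list_all_iff by blast
qed

lemma coeff_indep_poly:
  assumes "finite V"
  shows "coeff (indep_poly V Ed) k = indep_count V Ed k"
proof (cases "k \<le> card V")
  case True
  then show ?thesis unfolding indep_poly_def coeff_sum by simp
next
  case False
  have "ISets V Ed k = {}"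
  proof (rule ccontr)
    assume "ISets V Ed k \<noteq> {}"
    then obtain S where "S \<subseteq> V" "card S = k" by (auto simp: ISets_def independent_set_def)
    then have "k \<le> card V" using assms card_mono by blast
    then show False using False by simp
  qed
  then show ?thesis using False unfolding indep_poly_def coeff_sum by (simp add: indep_count_ISets)
qed

definition smode :: "(nat \<Rightarrow> nat) \<Rightarrow> nat \<Rightarrow> bool" where
  "smode f i \<longleftrightarrow> (if i = 0 then 0 < f 0 else f (i - 1) < f i) \<and> (\<forall>j\<ge>i. f (Suc j) \<le> f j)"

lemma smode_unique:
  assumes "smode f i" "smode f j" shows "i = j"
proof (rule ccontr)
  assume ne: "i \<noteq> j"
  have *: False if "smode f a" "smode f b" "a < b" for a b
  proof -
    have ab: "a \<le> b - 1" using that(3) by simp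
    have "f (Suc (b - 1)) \<le> f (b - 1)" using that(1) ab unfolding smode_def by blast
    moreover have "f (b - 1) < f b" using that(2,3) unfolding smode_def by (auto split: if_splits)
    moreover have "Suc (b - 1) = b" using that(3) by simp
    ultimately show False by simp
  qed
  show False using ne *[OF assms] *[OF assms(2) assms(1)] by linarith
qed

lemma mode_eq:
  assumes "smode (coeff p) i" shows "mode p = i"
  unfolding mode_def
proof (rule the_equality)
  show "is_mode p i" using assms unfolding is_mode_def smode_def by (auto split: if_splits)
  fix j assume "is_mode p j"
  then have "smode (coeff p) j" unfolding is_mode_def smode_def by (auto split: if_splits)
  then show "j = i" using smode_unique assms by blast
qed

lemma unimodal_of_smode:
  assumes "smode (coeff p) i" "\<forall>j<i. coeff p j \<le> coeff p (Suc j)"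
  shows "unimodal p"
  unfolding unimodal_def using assms unfolding smode_def by blast


lemma seq_main:
  assumes m5: "m \<ge> 5"
  shows "\<exists>\<rho> \<mu>. smode (cc m) \<rho> \<and> smode (tt m) \<mu> \<and> (\<forall>j<\<mu>. tt m j \<le> tt m (Suc j)) \<and> \<mu> \<in> {\<rho>, \<rho> + 1, \<rho> + 2}"
proof -
  define c where "c = cc m"
  define t where "t = tt m"
  define p where "p = pb m"
  have c0: "c 0 = 1" by (simp add: c_def cc_def)
  have c1: "c 1 = m" using m5 by (simp add: c_def cc_def)
  have p0: "p 0 = 1" by (simp add: p_def pb_def)
  define \<rho> where "\<rho> = (LEAST k. c (k + 1) \<le> c k)"
  have ex: "c (m + 1) \<le> c m" using cc_zero[of m "m + 1"] m5 by (simp add: c_def)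
  have L2: "c (\<rho> + 1) \<le> c \<rho>" unfolding \<rho>_def by (rule LeastI[of _ m], rule ex)
  have L1: "c j < c (j + 1)" if "j < \<rho>" for j
    using not_less_Least[of j "\<lambda>k. c (k + 1) \<le> c k"] that unfolding \<rho>_def by simp
  have L3: "c (j + 1) \<le> c j" if "\<rho> \<le> j" for j
    using that
  proof (induction j rule: dec_induct)
    case base then show ?case by (rule L2)
  next
    case (step j)
    show ?case
    proof (rule ccontr)
      assume "\<not> c (Suc j + 1) \<le> c (Suc j)"
      then have "cc m (j + 1) < cc m (j + 2)" by (simp add: c_def)
      then have "cc m j < cc m (j + 1)" using C2[of m j] m5 by simp
      then show False using step.IH by (simp add: c_def)
    qed
  qed
  have rho1: "\<rho> \<ge> 1"
  proof (rule ccontr)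
    assume "\<not> \<rho> \<ge> 1" then have "\<rho> = 0" by simp
    then show False using L2 c0 c1 m5 by simp
  qed
  have smc: "smode c \<rho>"
    unfolding smode_def using rho1 L1[of "\<rho> - 1"] L3 by auto
  have Pup: "p i \<le> p (i + 1)" if "c (i + 1) < c (i + 2)" for i
    using P_up[of m i] that m5 by (simp add: c_def p_def)
  have Pdown: "p (i + 1) \<le> p i" if "c (i + 1) \<le> c i" for i
    using P_down[of m i] that by (simp add: c_def p_def)
  have tS: "t (Suc i) = c (Suc i) + 2 * c i + p i + (if i = 0 then 0 else p (i - 1))" for i
    by (simp add: t_def c_def p_def tt_def)
  have t0: "t 0 = 1" by (simp add: t_def tt_def)
  have T1: "t j < t (j + 1)" if "j < \<rho>" for j
  proof (cases j)
    case 0 then show ?thesis using tS[of 0] c0 c1 p0 t0 by simp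
  next
    case (Suc i)
    have a1: "c (i + 1) < c (i + 2)" using L1[of "i + 1"] that Suc by simp
    have a2: "c i < c (i + 1)" using L1[of i] that Suc by simp
    have a3: "p i \<le> p (i + 1)" using Pup[OF a1] .
    have a4: "p (i - 1) \<le> p i" if "i \<ge> 1"
      using Pup[of "i - 1"] a2 that by simp
    show ?thesis using tS[of i] tS[of "Suc i"] a1 a2 a3 a4 Suc by auto
  qed
  have T2: "t (j + 1) \<le> t j" if "\<rho> + 2 \<le> j" for j
  proof -
    define i where "i = j - 2"
    have i: "j = i + 2" "\<rho> \<le> i" using that by (simp_all add: i_def)
    have a1: "c (i + 3) \<le> c (i + 2)" using L3[of "i + 2"] i by (simp add: numeral_3_eq_3 numeral_2_eq_2)
    have a2: "c (i + 2) \<le> c (i + 1)" using L3[of "i + 1"] i by simp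
    have a3: "p (i + 2) \<le> p (i + 1)" using Pdown[of "i + 1"] a2 by simp
    have a4: "p (i + 1) \<le> p i" using Pdown[of i] L3[of i] i by simp
    show ?thesis using tS[of "i + 2"] tS[of "i + 1"] a1 a2 a3 a4 i
      by (simp add: numeral_eq_Suc)
  qed
  have tpos: "t \<rho> > 0" using T1[of "\<rho> - 1"] rho1 by simp
  have cpos: "c \<rho> > 0" using L1[of "\<rho> - 1"] rho1 by simp
  have rho_le: "2 * \<rho> \<le> m"
  proof (rule ccontr)
    assume "\<not> 2 * \<rho> \<le> m"
    then have "m < 2 * \<rho>" by simp
    moreover have "\<rho> \<ge> 2" using calculation m5 by simp
    ultimately have "c \<rho> = 0" using cc_zero by (simp add: c_def)
    then show False using cpos by simp
  qed
  have T3: "t (\<rho> + 2) \<le> t (\<rho> + 1)" if hyp: "t (\<rho> + 1) \<le> t \<rho>"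
  proof (cases "m \<le> 11")
    case True
    have "\<rho> < 6" using rho_le True by simp
    then show ?thesis using small_window[of m \<rho>] True m5 hyp by (simp add: t_def)
  next
    case False
    then have m12: "m \<ge> 12" by simp
    have c2: "c 2 > c 1"
    proof -
      have "(1 + 1) * (m - 1 - 1) * cc m (1 + 1) = (m - 2 * 1) * (m - 2 * 1 - 1) * cc m 1"
        by (rule B2c) (use m5 in simp)
      then have "2 * (m - 2) * c 2 = (m - 2) * ((m - 3) * c 1)" by (simp add: c_def numeral_eq_Suc)
      then have "2 * c 2 = (m - 3) * c 1" using m5 by simp
      moreover have "(m - 3) * c 1 > 2 * c 1" using m12 c1 by simp
      ultimately show ?thesis by linarith
    qed
    have rho2: "\<rho> \<ge> 2"
    proof (rule ccontr)
      assume "\<not> \<rho> \<ge> 2" then have "\<rho> = 1" using rho1 by simp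
      then show False using L2 c2 by (simp add: numeral_eq_Suc)
    qed
    define j where "j = \<rho> - 1"
    have j: "\<rho> = j + 1" using rho1 by (simp add: j_def)
    have bnd: "m \<ge> 2 * \<rho> + 4"
    proof (rule ccontr)
      assume nb: "\<not> m \<ge> 2 * \<rho> + 4"
      have cj: "c j < c (j + 1)" using L1[of j] j by simp
      have jm: "j < m" using rho_le j by simp
      have r: "(j + 1) * (m - j - 1) * c (j + 1) = (m - 2 * j) * (m - 2 * j - 1) * c j"
        using B2c[OF jm] by (simp add: c_def)
      define x where "x = m - 2 * j"
      have x5: "x \<le> 5" using nb j by (simp add: x_def)
      have xx: "(m - 2 * j - 1) = x - 1" by (simp add: x_def)
      have "(j + 1) * (m - j - 1) * c (j + 1) < x * (x - 1) * c (j + 1)"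
      proof -
        have pos: "(j + 1) * (m - j - 1) * c (j + 1) > 0" using rho_le j cj by simp
        have pos2: "(m - 2 * j) * (m - 2 * j - 1) * c j > 0" using pos unfolding r .
        then have xp: "x * (x - 1) > 0" unfolding x_def by simp
        have e: "(j + 1) * (m - j - 1) * c (j + 1) = x * (x - 1) * c j" unfolding r x_def ..
        have "x * (x - 1) * c j < x * (x - 1) * c (j + 1)" using cj xp by simp
        then show ?thesis unfolding e .
      qed
      then have q: "(j + 1) * (m - j - 1) < x * (x - 1)" by (simp only: mult_less_cancel2)
      have "x * (x - 1) \<le> 5 * 4" using x5 by (intro mult_le_mono) auto
      moreover have "(j + 1) * (j + 1) \<le> (j + 1) * (m - j - 1)" using rho_le j by (intro mult_le_mono) auto
      ultimately have "(j + 1) * (j + 1) < 20" using q by simp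
      then have "j + 1 < 5"
      proof (rule contrapos_pp)
        assume "\<not> j + 1 < 5"
        then have "5 * 5 \<le> (j + 1) * (j + 1)" by (intro mult_le_mono) auto
        then show "\<not> (j + 1) * (j + 1) < 20" by simp
      qed
      then show False using nb j m12 by simp
    qed
    define K where "K = \<rho> - 2"
    have K: "\<rho> = K + 2" using rho2 by (simp add: K_def)
    define A where "A = m - 2 * K - 8"
    have A: "m = 2 * K + A + 8" using bnd K by (simp add: A_def)
    have lc: "t \<rho> * t (\<rho> + 2) \<le> (t (\<rho> + 1)) ^ 2"
      using LC_tt[OF A] K by (simp add: t_def add.assoc numeral_eq_Suc)
    show ?thesis
    proof (rule ccontr)
      assume "\<not> t (\<rho> + 2) \<le> t (\<rho> + 1)"
      then have gt: "t (\<rho> + 1) < t (\<rho> + 2)" by simp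
      have "t (\<rho> + 1) * t (\<rho> + 1) < t \<rho> * t (\<rho> + 2)"
      proof (cases "t (\<rho> + 1) = 0")
        case True then show ?thesis using tpos gt by simp
      next
        case False
        have "t (\<rho> + 1) * t (\<rho> + 1) < t (\<rho> + 1) * t (\<rho> + 2)" using gt False by simp
        also have "\<dots> \<le> t \<rho> * t (\<rho> + 2)" using hyp by (simp add: mult_le_mono1)
        finally show ?thesis .
      qed
      then show False using lc by (simp add: power2_eq_square)
    qed
  qed
  show ?thesis
  proof (cases "t (\<rho> + 1) \<le> t \<rho>")
    case True
    have "smode t \<rho>"
      unfolding smode_def
    proof (intro conjI allI impI)
      show "if \<rho> = 0 then 0 < t 0 else t (\<rho> - 1) < t \<rho>" using rho1 T1[of "\<rho> - 1"] by simp
      fix j assume "\<rho> \<le> j"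
      then consider "j = \<rho>" | "j = \<rho> + 1" | "\<rho> + 2 \<le> j" by linarith
      then show "t (Suc j) \<le> t j" using True T3[OF True] T2 by cases auto
    qed
    moreover have "\<forall>j<\<rho>. t j \<le> t (Suc j)" using T1 by (simp add: less_imp_le)
    ultimately show ?thesis using smc unfolding c_def t_def by blast
  next
    case F1: False
    show ?thesis
    proof (cases "t (\<rho> + 2) \<le> t (\<rho> + 1)")
      case True
      have "smode t (\<rho> + 1)"
        unfolding smode_def
      proof (intro conjI allI impI)
        show "if \<rho> + 1 = 0 then 0 < t 0 else t (\<rho> + 1 - 1) < t (\<rho> + 1)" using F1 by simp
        fix j assume "\<rho> + 1 \<le> j"
        then consider "j = \<rho> + 1" | "\<rho> + 2 \<le> j" by linarith
        then show "t (Suc j) \<le> t j" using True T2 by cases auto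
      qed
      moreover have "\<forall>j<\<rho> + 1. t j \<le> t (Suc j)" using T1 F1
        by (auto simp: less_Suc_eq less_imp_le)
      ultimately show ?thesis using smc unfolding c_def t_def by blast
    next
      case F2: False
      have "smode t (\<rho> + 2)"
        unfolding smode_def
      proof (intro conjI allI impI)
        show "if \<rho> + 2 = 0 then 0 < t 0 else t (\<rho> + 2 - 1) < t (\<rho> + 2)" using F2 by simp
        fix j assume "\<rho> + 2 \<le> j"
        then show "t (Suc j) \<le> t j" using T2 by simp
      qed
      moreover have "\<forall>j<\<rho> + 2. t j \<le> t (Suc j)" using T1 F1 F2
        by (auto simp: less_Suc_eq less_imp_le numeral_eq_Suc)
      ultimately show ?thesis using smc unfolding c_def t_def by blast
    qed
  qed
qed


theorem proposition3p3:
  fixes m :: nat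
  assumes "m \<ge> 5"
  shows "unimodal (indep_poly (tadpole_vertices m 3) (tadpole_edges m 3)) \<and>
         mode (indep_poly (tadpole_vertices m 3) (tadpole_edges m 3))
           \<in> {mode (indep_poly (cycle_vertices m) (cycle_edges m)),
               mode (indep_poly (cycle_vertices m) (cycle_edges m)) + 1,
               mode (indep_poly (cycle_vertices m) (cycle_edges m)) + 2}"
proof -
  have m3: "m \<ge> 3" using assms by simp
  have fC: "finite (cycle_vertices m)" by (simp add: cycle_vertices_def)
  have fT: "finite (tadpole_vertices m 3)" by (simp add: tadpole_vertices_def)
  have cC: "coeff (indep_poly (cycle_vertices m) (cycle_edges m)) = cc m"
    by (rule ext) (simp add: coeff_indep_poly[OF fC] cycle_count[OF m3])
  have cT: "coeff (indep_poly (tadpole_vertices m 3) (tadpole_edges m 3)) = tt m"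
    by (rule ext) (simp add: coeff_indep_poly[OF fT] tadpole_count[OF m3])
  obtain \<rho> \<mu> where r: "smode (cc m) \<rho>" "smode (tt m) \<mu>" "\<forall>j<\<mu>. tt m j \<le> tt m (Suc j)"
    "\<mu> \<in> {\<rho>, \<rho> + 1, \<rho> + 2}"
    using seq_main[OF assms] by blast
  have mC: "mode (indep_poly (cycle_vertices m) (cycle_edges m)) = \<rho>"
    by (rule mode_eq) (simp add: cC r(1))
  have mT: "mode (indep_poly (tadpole_vertices m 3) (tadpole_edges m 3)) = \<mu>"
    by (rule mode_eq) (simp add: cT r(2))
  have uT: "unimodal (indep_poly (tadpole_vertices m 3) (tadpole_edges m 3))"
    by (rule unimodal_of_smode[of _ \<mu>]) (simp_all add: cT r(2) r(3))
  show ?thesis using uT mC mT r(4) by simp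
qed

end
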